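(* Let $(G,\sigma)$ be a connection graph and $i\neq j$ vertices, and write the conductance matrix as $\mathcal{C}^\sigma(i,j)=\begin{bmatrix}\mathcal{C}^\sigma_{ii}&\mathcal{C}^\sigma_{ij}\\ \mathcal{C}^\sigma_{ji}&\mathcal{C}^\sigma_{jj}\end{bmatrix}$. Then $$\mathcal{C}^\sigma_{ii}=\deg(i)\big(I_{d\times d}-(1-\mathbb{P}^i[T^1_j<T^1_i])\,\Omega^1_{ii}(j)\big),\qquad \mathcal{C}^\sigma_{ji}=-\deg(j)\,\mathbb{P}^j[T^1_i<T^1_j]\,\Omega^1_{ji}(j),$$ and, using $c_{ij}=\deg(i)\mathbb{P}^i[T^1_j<T^1_i]=\deg(j)\mathbb{P}^j[T^1_i<T^1_j]$, $$\mathcal{C}^\sigma(i,j)=c_{ij}\begin{bmatrix}I&-I\\-I&I\end{bmatrix}+\begin{bmatrix}(\deg(i)-c_{ij})(I-\Omega^1_{ii}(j))& c_{ij}(I-\Omega^1_{ij}(i))\\ c_{ij}(I-\Omega^1_{ji}(j))&(\deg(j)-c_{ij})(I-\Omega^1_{jj}(i))\end{bmatrix},$$ where $I=I_{d\times d}$.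
   Context: A connection graph $(G,\sigma)$: finite connected weighted graph $G=(V,E,W)$, $V=\{1,\dots,n\}$, $w_{xy}>0$ iff $\{x,y\}\in E$, $\deg(x)=\sum_y w_{xy}$, and $\sigma$ mapping oriented edges to $\mathsf{O}(d)$ with $\sigma_{yx}=\sigma_{xy}^{\mathrm T}$. Connection Laplacian $\mathcal{L}$: $nd\times nd$ block matrix with blocks $\deg(x)I_d$ on the diagonal, $-w_{xy}\sigma_{xy}$ for $x\sim y$, $0$ otherwise. For a block matrix $M=\begin{bmatrix}A&B\\C&D\end{bmatrix}$, $M/D=A-BD^\dagger C$ ($\dagger$ = Moore–Penrose inverse). The conductance matrix $\mathcal{C}^\sigma(i,j)\in\mathbb{R}^{2d\times2d}$ is the Schur complement $\mathcal{L}/\mathcal{L}_{\{i,j\}^c,\{i,j\}^c}$, with blocks ordered $i$ then $j$. Classical effective resistance $r_{ij}=(e_i-e_j)^{\mathrm T}L^\dagger(e_i-e_j)$ where $L=D-W$ is the graph Laplacian, and $c_{ij}=1/r_{ij}$. $(X_t)$: simple random walk with transition probabilities $w_{xy}/\deg(x)$; $\mathbb{P}^x$ given $X_0=x$; $T^1_k=\inf\{t\ge1:X_t=k\}$. For $a,b,k\in V$, $\Omega^1_{ab}(k)=\mathbb{E}^a\big[\prod_{\ell=1}^{T^1_b}\sigma_{X_{\ell-1}X_\ell}\mid T^1_b<T^1_k\big]$ (ordered product). *)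

theory Defs
  imports "HOL-Analysis.Analysis"
begin

definition mmul :: "'i set \<Rightarrow> ('i \<Rightarrow> 'i \<Rightarrow> real) \<Rightarrow> ('i \<Rightarrow> 'i \<Rightarrow> real) \<Rightarrow> 'i \<Rightarrow> 'i \<Rightarrow> real" where
  "mmul S A B x y = (\<Sum>z\<in>S. A x z * B z y)"

definition pinv :: "'i set \<Rightarrow> ('i \<Rightarrow> 'i \<Rightarrow> real) \<Rightarrow> 'i \<Rightarrow> 'i \<Rightarrow> real" where
  "pinv S A = (THE X. (\<forall>x y. (x \<notin> S \<or> y \<notin> S) \<longrightarrow> X x y = 0) \<and>
     (\<forall>x\<in>S. \<forall>y\<in>S. mmul S (mmul S A X) A x y = A x y) \<and>
     (\<forall>x\<in>S. \<forall>y\<in>S. mmul S (mmul S X A) X x y = X x y) \<and>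
     (\<forall>x\<in>S. \<forall>y\<in>S. mmul S A X x y = mmul S A X y x) \<and>
     (\<forall>x\<in>S. \<forall>y\<in>S. mmul S X A x y = mmul S X A y x))"

text \<open>Schur complement M / M_{S^c,S^c}, the result being read on S x S.\<close>
definition schur :: "'i set \<Rightarrow> ('i \<Rightarrow> 'i \<Rightarrow> real) \<Rightarrow> 'i \<Rightarrow> 'i \<Rightarrow> real" where
  "schur S M p q = M p q - (\<Sum>r\<in>-S. \<Sum>s\<in>-S. M p r * pinv (-S) M r s * M s q)"

definition deg :: "('n::finite \<Rightarrow> 'n \<Rightarrow> real) \<Rightarrow> 'n \<Rightarrow> real" where
  "deg w x = (\<Sum>y\<in>UNIV. w x y)"

definition weighted_graph :: "('n::finite \<Rightarrow> 'n \<Rightarrow> real) \<Rightarrow> bool" where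
  "weighted_graph w \<longleftrightarrow> (\<forall>x y. w x y \<ge> 0 \<and> w x y = w y x) \<and> (\<forall>x. w x x = 0)
     \<and> (\<forall>x y. (x, y) \<in> {(u, v). w u v > 0}\<^sup>*)"

definition connection :: "('n::finite \<Rightarrow> 'n \<Rightarrow> real) \<Rightarrow> ('n \<Rightarrow> 'n \<Rightarrow> real^'d^'d) \<Rightarrow> bool" where
  "connection w \<sigma> \<longleftrightarrow> (\<forall>x y. w x y > 0 \<longrightarrow>
      orthogonal_matrix (\<sigma> x y) \<and> \<sigma> y x = transpose (\<sigma> x y))"

definition conn_laplacian :: "('n::finite \<Rightarrow> 'n \<Rightarrow> real) \<Rightarrow> ('n \<Rightarrow> 'n \<Rightarrow> real^'d::finite^'d)
     \<Rightarrow> ('n \<times> 'd) \<Rightarrow> ('n \<times> 'd) \<Rightarrow> real" where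
  "conn_laplacian w \<sigma> p q = (let (x, a) = p; (y, b) = q in
     if x = y then (if a = b then deg w x else 0)
     else (if w x y > 0 then - w x y * (\<sigma> x y $ a $ b) else 0))"

definition conductance :: "('n::finite \<Rightarrow> 'n \<Rightarrow> real) \<Rightarrow> ('n \<Rightarrow> 'n \<Rightarrow> real^'d::finite^'d)
     \<Rightarrow> 'n \<Rightarrow> 'n \<Rightarrow> ('n \<times> 'd) \<Rightarrow> ('n \<times> 'd) \<Rightarrow> real" where
  "conductance w \<sigma> i j = schur ({i, j} \<times> UNIV) (conn_laplacian w \<sigma>)"

definition blk :: "(('n \<times> 'd) \<Rightarrow> ('n \<times> 'd) \<Rightarrow> real) \<Rightarrow> 'n \<Rightarrow> 'n \<Rightarrow> real^'d::finite^'d" where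
  "blk C x y = (\<chi> a b. C (x, a) (y, b))"

definition graph_laplacian :: "('n::finite \<Rightarrow> 'n \<Rightarrow> real) \<Rightarrow> 'n \<Rightarrow> 'n \<Rightarrow> real" where
  "graph_laplacian w x y = (if x = y then deg w x else 0) - w x y"

definition eff_resistance :: "('n::finite \<Rightarrow> 'n \<Rightarrow> real) \<Rightarrow> 'n \<Rightarrow> 'n \<Rightarrow> real" where
  "eff_resistance w i j = (let e = (\<lambda>x. (if x = i then 1 else 0) - (if x = j then 1 else (0::real)))
     in \<Sum>x\<in>UNIV. \<Sum>y\<in>UNIV. e x * pinv UNIV (graph_laplacian w) x y * e y)"

definition eff_conductance :: "('n::finite \<Rightarrow> 'n \<Rightarrow> real) \<Rightarrow> 'n \<Rightarrow> 'n \<Rightarrow> real" where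
  "eff_conductance w i j = 1 / eff_resistance w i j"

text \<open>A trajectory after time 0 is the list [X_1,...,X_m].
  hitpaths b k m: trajectories of length m >= 1 with X_m = b and X_l not in {b,k} for 1 <= l < m,
  i.e. exactly the event {T^1_b = m, T^1_b < T^1_k}.\<close>
definition tprob :: "('n::finite \<Rightarrow> 'n \<Rightarrow> real) \<Rightarrow> 'n \<Rightarrow> 'n \<Rightarrow> real" where
  "tprob w x y = w x y / deg w x"

definition pathprob :: "('n::finite \<Rightarrow> 'n \<Rightarrow> real) \<Rightarrow> 'n \<Rightarrow> 'n list \<Rightarrow> real" where
  "pathprob w a vs = prod_list (map (\<lambda>(x, y). tprob w x y) (zip (a # vs) vs))"

definition pathhol :: "('n \<Rightarrow> 'n \<Rightarrow> real^'d::finite^'d) \<Rightarrow> 'n \<Rightarrow> 'n list \<Rightarrow> real^'d^'d" where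
  "pathhol \<sigma> a vs = foldl (**) (mat 1) (map (\<lambda>(x, y). \<sigma> x y) (zip (a # vs) vs))"

definition hitpaths :: "'n \<Rightarrow> 'n \<Rightarrow> nat \<Rightarrow> 'n list set" where
  "hitpaths b k m = {vs. length vs = m \<and> vs \<noteq> [] \<and> last vs = b \<and>
       (\<forall>v\<in>set (butlast vs). v \<noteq> b \<and> v \<noteq> k)}"

definition hitprob :: "('n::finite \<Rightarrow> 'n \<Rightarrow> real) \<Rightarrow> 'n \<Rightarrow> 'n \<Rightarrow> 'n \<Rightarrow> real" where
  "hitprob w a b k = (\<Sum>m. \<Sum>vs\<in>hitpaths b k m. pathprob w a vs)"

text \<open>Omega^1_{ab}(k) = E^a[ordered product of sigma up to T^1_b | T^1_b < T^1_k]\<close>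
definition Omega1 :: "('n::finite \<Rightarrow> 'n \<Rightarrow> real) \<Rightarrow> ('n \<Rightarrow> 'n \<Rightarrow> real^'d::finite^'d)
     \<Rightarrow> 'n \<Rightarrow> 'n \<Rightarrow> 'n \<Rightarrow> real^'d^'d" where
  "Omega1 w \<sigma> a b k = (1 / hitprob w a b k) *\<^sub>R
     (\<Sum>m. \<Sum>vs\<in>hitpaths b k m. pathprob w a vs *\<^sub>R pathhol \<sigma> a vs)"

end

theory Submission
  imports Defs
begin
lemma sum_UNIV_split2:
  fixes f :: "'n::finite \<Rightarrow> 'a::comm_monoid_add"
  assumes "b \<noteq> k"
  shows "sum f UNIV = f b + f k + sum f (- {b, k})"
proof -
  have u: "UNIV = {b, k} \<union> (- {b, k})" by auto
  have "sum f UNIV = sum f ({b, k} \<union> (- {b, k}))" by (subst u[symmetric]) simp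
  also have "\<dots> = sum f {b,k} + sum f (- {b,k})"
    by (rule sum.union_disjoint) auto
  finally have "sum f UNIV = sum f {b,k} + sum f (- {b,k})" .
  then show ?thesis using assms by simp
qed

context
  fixes w :: "'n::finite \<Rightarrow> 'n \<Rightarrow> real"
  assumes wg: "weighted_graph w"
begin

lemma w_nonneg: "w x y \<ge> 0" using wg unfolding weighted_graph_def by auto
lemma w_sym: "w x y = w y x" using wg unfolding weighted_graph_def by auto
lemma w_diag: "w x x = 0" using wg unfolding weighted_graph_def by auto
lemma w_conn: "(x, y) \<in> {(u, v). w u v > 0}\<^sup>*" using wg unfolding weighted_graph_def by auto

lemma deg_nonneg: "deg w x \<ge> 0"
  unfolding deg_def by (simp add: sum_nonneg w_nonneg)

lemma deg_pos:
  assumes "x \<noteq> (y::'n)"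
  shows "deg w x > 0"
proof -
  have "(x, y) \<in> {(u, v). w u v > 0}\<^sup>*" by (rule w_conn)
  then obtain z where z: "w x z > 0"
    using assms by (metis (no_types, lifting) case_prodD converse_rtranclE mem_Collect_eq)
  have "w x z \<le> deg w x" unfolding deg_def
    by (rule member_le_sum) (auto simp: w_nonneg)
  with z show ?thesis by simp
qed

lemma tprob_nonneg: "tprob w x y \<ge> 0"
  unfolding tprob_def by (simp add: w_nonneg deg_nonneg)

lemma tprob_sum:
  assumes "x \<noteq> (y::'n)"
  shows "(\<Sum>z\<in>UNIV. tprob w x z) = 1"
proof -
  have "(\<Sum>z\<in>UNIV. tprob w x z) = (\<Sum>z\<in>UNIV. w x z) / deg w x"
    unfolding tprob_def by (simp add: sum_divide_distrib)
  also have "\<dots> = 1" using deg_pos[OF assms] unfolding deg_def by simp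
  finally show ?thesis .
qed

lemma deg_tprob: "deg w x * tprob w x y = w x y" if "deg w x > 0"
  using that unfolding tprob_def by simp

lemma max_closed:
  fixes f :: "'n \<Rightarrow> real"
  assumes fmax: "\<And>y. f y \<le> f a"
    and sub: "\<And>r. f r = f a \<Longrightarrow> r \<in> U \<Longrightarrow> deg w r * f r \<le> (\<Sum>y\<in>UNIV. w r y * f y)"
  shows "(\<forall>y. f y = f a) \<or> (\<exists>y. y \<notin> U \<and> f y = f a)"
proof (cases "\<exists>y. y \<notin> U \<and> f y = f a")
  case True then show ?thesis by blast
next
  case False
  have closed: "f z = f a" if "f r = f a" "w r z > 0" for r z
  proof -
    have rU: "r \<in> U" using False that(1) by blast
    have "deg w r * f a \<le> (\<Sum>y\<in>UNIV. w r y * f y)" using sub[OF that(1) rU] that(1) by simp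
    then have "(\<Sum>y\<in>UNIV. w r y * f a) \<le> (\<Sum>y\<in>UNIV. w r y * f y)"
      unfolding deg_def by (simp add: sum_distrib_right)
    then have le: "(\<Sum>y\<in>UNIV. w r y * (f a - f y)) \<le> 0"
      by (simp add: right_diff_distrib sum_subtractf)
    have nn: "\<And>y. 0 \<le> w r y * (f a - f y)" using fmax w_nonneg by simp
    then have "(\<Sum>y\<in>UNIV. w r y * (f a - f y)) = 0"
      using le by (meson antisym sum_nonneg)
    then have "w r z * (f a - f z) = 0"
      using nn by (simp add: sum_nonneg_eq_0_iff)
    then show ?thesis using that(2) by simp
  qed
  have "f y = f a" for y
  proof -
    have "(a, y) \<in> {(u, v). w u v > 0}\<^sup>*" by (rule w_conn)
    then show ?thesis
    proof (induction rule: rtrancl_induct)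
      case base then show ?case by simp
    next
      case (step y z) then show ?case using closed[of y z] by simp
    qed
  qed
  then show ?thesis by blast
qed

lemma ex_max: fixes f :: "'n \<Rightarrow> real" obtains a where "\<And>y. f y \<le> f a"
proof -
  have fin: "finite (range f)" by simp
  have "Max (range f) \<in> range f" by (rule Max_in[OF fin]) simp
  then obtain a where a: "f a = Max (range f)" by (metis rangeE)
  have "\<forall>y. f y \<le> f a" unfolding a using Max_ge[OF fin] by simp
  then have "\<exists>a. \<forall>y. f y \<le> f a" by blast
  then show ?thesis using that by blast
qed

lemma scalar_unique:
  fixes g :: "'n \<Rightarrow> real"
  assumes out: "\<And>r. r \<notin> U \<Longrightarrow> g r = 0" and U: "U \<noteq> UNIV"
    and harm: "\<And>r. r \<in> U \<Longrightarrow> deg w r * g r = (\<Sum>y\<in>UNIV. w r y * g y)"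
  shows "g r = 0"
proof -
  obtain u where uU: "u \<notin> U" using U by blast
  have le: "g r \<le> 0" if harm': "\<And>r. r \<in> U \<Longrightarrow> deg w r * g r = (\<Sum>y\<in>UNIV. w r y * g y)"
     and out': "\<And>r. r \<notin> U \<Longrightarrow> g r = 0" for g :: "'n \<Rightarrow> real" and r
  proof -
    obtain a where a: "\<And>y. g y \<le> g a" using ex_max by blast
    have "(\<forall>y. g y = g a) \<or> (\<exists>y. y \<notin> U \<and> g y = g a)"
    proof (rule max_closed[of g a U])
      show "\<And>y. g y \<le> g a" by (rule a)
    next
      fix r assume "r \<in> U" then show "deg w r * g r \<le> (\<Sum>y\<in>UNIV. w r y * g y)"
        using harm' by simp
    qed
    then have "g a = 0" using out' uU by metis
    then show ?thesis using a by metis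
  qed
  have "g r \<le> 0" using le[OF harm out] .
  moreover have "- g r \<le> 0"
  proof (rule le[of "\<lambda>x. - g x"])
    fix r assume "r \<in> U"
    then have "deg w r * g r = (\<Sum>y\<in>UNIV. w r y * g y)" by (rule harm)
    then show "deg w r * - g r = (\<Sum>y\<in>UNIV. w r y * - g y)"
      by (simp add: sum_negf)
  next
    fix r assume "r \<notin> U" then show "- g r = 0" using out by simp
  qed
  ultimately show ?thesis by simp
qed

end

definition aser :: "('n::finite \<Rightarrow> 'n \<Rightarrow> real) \<Rightarrow> 'n \<Rightarrow> 'n \<Rightarrow> 'n \<Rightarrow> nat \<Rightarrow> real" where
  "aser w x b k m = (\<Sum>vs\<in>hitpaths b k m. pathprob w x vs)"

definition Aser :: "('n::finite \<Rightarrow> 'n \<Rightarrow> real) \<Rightarrow> ('n \<Rightarrow> 'n \<Rightarrow> real^'d::finite^'d) \<Rightarrow> 'n \<Rightarrow> 'n \<Rightarrow> 'n \<Rightarrow> nat \<Rightarrow> real^'d^'d" where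
  "Aser w \<sigma> x b k m = (\<Sum>vs\<in>hitpaths b k m. pathprob w x vs *\<^sub>R pathhol \<sigma> x vs)"

definition hser :: "('n::finite \<Rightarrow> 'n \<Rightarrow> real) \<Rightarrow> ('n \<Rightarrow> 'n \<Rightarrow> real^'d::finite^'d) \<Rightarrow> 'n \<Rightarrow> 'n \<Rightarrow> 'n \<Rightarrow> real^'d^'d" where
  "hser w \<sigma> x b k = suminf (Aser w \<sigma> x b k)"

lemma hitprob_aser: "hitprob w x b k = suminf (aser w x b k)"
  unfolding hitprob_def aser_def by simp

lemma Omega1_hser: "Omega1 w \<sigma> x b k = (1 / hitprob w x b k) *\<^sub>R hser w \<sigma> x b k"
  unfolding Omega1_def hser_def Aser_def by simp

lemma hitpaths_0: "hitpaths b k 0 = {}"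
  unfolding hitpaths_def by auto

lemma hitpaths_Suc: "hitpaths b k (Suc m) =
   (if m = 0 then {[b]} else (\<lambda>(y, vs). y # vs) ` ((- {b, k}) \<times> hitpaths b k m))"
proof (cases "m = 0")
  case True
  then show ?thesis unfolding hitpaths_def
    by (auto simp: length_Suc_conv)
next
  case False
  show ?thesis
  proof (rule set_eqI)
    fix vs :: "'a list"
    show "vs \<in> hitpaths b k (Suc m) \<longleftrightarrow> vs \<in> (if m = 0 then {[b]} else (\<lambda>(y, vs). y # vs) ` ((- {b, k}) \<times> hitpaths b k m))"
    proof
      assume "vs \<in> hitpaths b k (Suc m)"
      then obtain y vs' where vs: "vs = y # vs'" "length vs' = m" "last vs = b"
        "\<forall>v\<in>set (butlast vs). v \<noteq> b \<and> v \<noteq> k"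
        unfolding hitpaths_def by (auto simp: length_Suc_conv)
      then have ne: "vs' \<noteq> []" using False by auto
      then have "y \<notin> {b,k}" "vs' \<in> hitpaths b k m"
        using vs ne unfolding hitpaths_def by auto
      then show "vs \<in> (if m = 0 then {[b]} else (\<lambda>(y, vs). y # vs) ` ((- {b, k}) \<times> hitpaths b k m))"
        using False vs by auto
    next
      assume "vs \<in> (if m = 0 then {[b]} else (\<lambda>(y, vs). y # vs) ` ((- {b, k}) \<times> hitpaths b k m))"
      then obtain y vs' where "vs = y # vs'" "y \<notin> {b,k}" "vs' \<in> hitpaths b k m"
        using False by auto
      then show "vs \<in> hitpaths b k (Suc m)"
        unfolding hitpaths_def by auto
    qed
  qed
qed

lemma finite_hitpaths: "finite (hitpaths b k m :: 'n::finite list set)"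
proof -
  have "hitpaths b k m \<subseteq> {xs. set xs \<subseteq> UNIV \<and> length xs = m}"
    unfolding hitpaths_def by auto
  then show ?thesis using finite_lists_length_eq[of "UNIV :: 'n set" m]
    by (simp add: finite_subset)
qed

lemma sum_hitpaths_Suc:
  fixes F :: "'n::finite list \<Rightarrow> 'a::comm_monoid_add"
  shows "sum F (hitpaths b k (Suc m)) =
    (if m = 0 then F [b] else 0) + (\<Sum>y\<in>- {b, k}. \<Sum>vs\<in>hitpaths b k m. F (y # vs))"
proof (cases "m = 0")
  case True
  then show ?thesis by (simp add: hitpaths_Suc hitpaths_0)
next
  case False
  have inj: "inj_on (\<lambda>(y, vs). y # vs) ((- {b, k}) \<times> hitpaths b k m)"
    by (auto simp: inj_on_def)
  have "sum F (hitpaths b k (Suc m)) = sum (F \<circ> (\<lambda>(y, vs). y # vs)) ((- {b, k}) \<times> hitpaths b k m)"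
    using False by (simp add: hitpaths_Suc sum.reindex[OF inj])
  also have "\<dots> = (\<Sum>y\<in>- {b, k}. \<Sum>vs\<in>hitpaths b k m. F (y # vs))"
    by (simp add: sum.cartesian_product o_def case_prod_unfold)
  finally show ?thesis using False by simp
qed

lemma pathprob_Nil [simp]: "pathprob w x [] = 1"
  unfolding pathprob_def by simp

lemma pathprob_Cons [simp]: "pathprob w x (y # vs) = tprob w x y * pathprob w y vs"
  unfolding pathprob_def by simp

lemma foldl_mmul: "foldl (**) (A ** B) xs = A ** foldl (**) B (xs :: (real^'d::finite^'d) list)"
  by (induction xs arbitrary: B) (simp_all add: matrix_mul_assoc[symmetric])

lemma pathhol_Nil [simp]: "pathhol \<sigma> x [] = mat 1"
  unfolding pathhol_def by simp

lemma pathhol_Cons [simp]: "pathhol \<sigma> x (y # vs) = \<sigma> x y ** pathhol \<sigma> y vs"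
proof -
  have "pathhol \<sigma> x (y # vs) = foldl (**) (\<sigma> x y ** mat 1) (map (\<lambda>(x, y). \<sigma> x y) (zip (y # vs) vs))"
    unfolding pathhol_def by simp
  also have "\<dots> = \<sigma> x y ** pathhol \<sigma> y vs"
    unfolding foldl_mmul pathhol_def by simp
  finally show ?thesis .
qed

lemma aser_0 [simp]: "aser w x b k 0 = 0"
  unfolding aser_def by (simp add: hitpaths_0)

lemma Aser_0 [simp]: "Aser w \<sigma> x b k 0 = 0"
  unfolding Aser_def by (simp add: hitpaths_0)

lemma aser_Suc: "aser w x b k (Suc m) =
   (if m = 0 then tprob w x b else 0) + (\<Sum>y\<in>- {b, k}. tprob w x y * aser w y b k m)"
  unfolding aser_def sum_hitpaths_Suc by (simp add: sum_distrib_left)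

lemma matrix_mul_scaleR_right: "(A::real^'m^'n) ** (c *\<^sub>R B) = c *\<^sub>R (A ** (B :: real^'p^'m))"
  by (simp add: vec_eq_iff matrix_matrix_mult_def sum_distrib_left mult.left_commute)

lemma matrix_mul_sum_right: "(A::real^'m^'n) ** (\<Sum>i\<in>I. F i) = (\<Sum>i\<in>I. A ** (F i :: real^'p^'m))"
  by (induction I rule: infinite_finite_induct) (simp_all add: matrix_add_ldistrib)

lemma Aser_Suc: "Aser w \<sigma> x b k (Suc m) =
   (if m = 0 then tprob w x b *\<^sub>R \<sigma> x b else 0) + (\<Sum>y\<in>- {b, k}. tprob w x y *\<^sub>R (\<sigma> x y ** Aser w \<sigma> y b k m))"
  unfolding Aser_def sum_hitpaths_Suc
  by (simp add: matrix_mul_sum_right matrix_mul_scaleR_right scaleR_sum_right)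

context
  fixes w :: "'n::finite \<Rightarrow> 'n \<Rightarrow> real"
  assumes wg: "weighted_graph w" and two: "\<exists>a b::'n. a \<noteq> b"
begin

lemma deg_pos': "deg w x > 0"
proof -
  obtain a b :: 'n where "a \<noteq> b" using two by blast
  then obtain y where "x \<noteq> y" by metis
  then show ?thesis using deg_pos[OF wg] by blast
qed

lemma tprob_sum': "(\<Sum>z\<in>UNIV. tprob w x z) = 1"
proof -
  obtain a b :: 'n where "a \<noteq> b" using two by blast
  then obtain y where "x \<noteq> y" by metis
  then show ?thesis using tprob_sum[OF wg] by blast
qed

lemma pathprob_nonneg: "pathprob w x vs \<ge> 0"
  by (induction vs arbitrary: x) (simp_all add: tprob_nonneg[OF wg])

lemma aser_nonneg: "aser w x b k m \<ge> 0"
  unfolding aser_def by (simp add: sum_nonneg pathprob_nonneg)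

lemma tprob_b_rest: "tprob w x b + (\<Sum>y\<in>- {b, k}. tprob w x y) \<le> 1"
proof -
  have u: "UNIV = insert b (- {b})" by auto
  have "(\<Sum>z\<in>UNIV. tprob w x z) = tprob w x b + (\<Sum>z\<in>- {b}. tprob w x z)"
    by (subst u) (simp add: sum.insert)
  moreover have "(\<Sum>y\<in>- {b, k}. tprob w x y) \<le> (\<Sum>z\<in>- {b}. tprob w x z)"
    by (rule sum_mono2) (auto simp: tprob_nonneg[OF wg])
  ultimately show ?thesis using tprob_sum' by simp
qed

lemma aser_partial: "(\<Sum>m<N. aser w x b k m) \<le> 1"
proof (induction N arbitrary: x)
  case 0 then show ?case by simp
next
  case (Suc N)
  have "(\<Sum>m<Suc N. aser w x b k m) = (\<Sum>m<N. aser w x b k (Suc m))"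
    by (subst sum.lessThan_Suc_shift) simp
  also have "\<dots> = (\<Sum>m<N. (if m = 0 then tprob w x b else 0))
      + (\<Sum>m<N. \<Sum>y\<in>- {b, k}. tprob w x y * aser w y b k m)"
    by (simp add: aser_Suc sum.distrib)
  also have "\<dots> \<le> tprob w x b + (\<Sum>y\<in>- {b, k}. tprob w x y)"
  proof (rule add_mono)
    show "(\<Sum>m<N. (if m = 0 then tprob w x b else 0)) \<le> tprob w x b"
      by (cases "N = 0") (auto simp: sum.delta' tprob_nonneg[OF wg])
    have "(\<Sum>m<N. \<Sum>y\<in>- {b, k}. tprob w x y * aser w y b k m)
        = (\<Sum>y\<in>- {b, k}. tprob w x y * (\<Sum>m<N. aser w y b k m))"
      by (subst sum.swap) (simp add: sum_distrib_left)
    also have "\<dots> \<le> (\<Sum>y\<in>- {b, k}. tprob w x y * 1)"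
      by (rule sum_mono, rule mult_left_mono) (auto simp: Suc.IH tprob_nonneg[OF wg])
    finally show "(\<Sum>m<N. \<Sum>y\<in>- {b, k}. tprob w x y * aser w y b k m) \<le> (\<Sum>y\<in>- {b, k}. tprob w x y)"
      by simp
  qed
  also have "\<dots> \<le> 1" by (rule tprob_b_rest)
  finally show ?case .
qed

lemma summable_aser: "summable (aser w x b k)"
proof (rule bounded_imp_summable)
  show "0 \<le> aser w x b k n" for n by (rule aser_nonneg)
  show "sum (aser w x b k) {..n} \<le> 1" for n
    using aser_partial[where N="Suc n"] by (simp add: lessThan_Suc_atMost)
qed

lemma hitprob_nonneg: "hitprob w x b k \<ge> 0"
  unfolding hitprob_aser by (rule suminf_nonneg[OF summable_aser aser_nonneg])

lemma hitprob_le1: "hitprob w x b k \<le> 1"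
  unfolding hitprob_aser by (rule suminf_le_const[OF summable_aser aser_partial])

lemma hitprob_step: "hitprob w x b k = tprob w x b + (\<Sum>y\<in>- {b, k}. tprob w x y * hitprob w y b k)"
proof -
  have s1: "(\<lambda>m. if m = 0 then tprob w x b else 0) sums tprob w x b"
    using sums_single[of 0 "\<lambda>_. tprob w x b"] by simp
  have s2: "(\<lambda>m. \<Sum>y\<in>- {b, k}. tprob w x y * aser w y b k m) sums (\<Sum>y\<in>- {b, k}. tprob w x y * hitprob w y b k)"
    by (rule sums_sum, rule sums_mult) (simp add: hitprob_aser summable_sums summable_aser)
  have "(\<lambda>m. aser w x b k (Suc m)) sums (tprob w x b + (\<Sum>y\<in>- {b, k}. tprob w x y * hitprob w y b k))"
    unfolding aser_Suc by (rule sums_add[OF s1 s2])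
  then have "aser w x b k sums (tprob w x b + (\<Sum>y\<in>- {b, k}. tprob w x y * hitprob w y b k))"
    by (simp add: sums_Suc_iff)
  then show ?thesis unfolding hitprob_aser by (rule sums_unique[symmetric])
qed

lemma row_eq: "row i (Q::real^'d::finite^'d) = Q $ i"
  by (simp add: row_def vec_eq_iff)

lemma orth_norm_le:
  assumes "orthogonal_matrix (Q::real^'d::finite^'d)"
  shows "norm Q \<le> real CARD('d)"
proof -
  have "norm Q = L2_set (\<lambda>i. norm (Q $ i)) UNIV" by (simp add: norm_vec_def)
  also have "\<dots> \<le> (\<Sum>i\<in>UNIV. norm (Q $ i))" by (rule L2_set_le_sum) simp
  also have "\<dots> = (\<Sum>i\<in>(UNIV::'d set). 1)"
    using assms unfolding orthogonal_matrix_orthonormal_rows row_eq by simp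
  finally show ?thesis by simp
qed

lemma norm_orth_mult:
  assumes "orthogonal_matrix (Q::real^'d::finite^'d)"
  shows "norm (Q *v x) = norm x"
proof -
  have "(Q *v x) \<bullet> (Q *v x) = x \<bullet> x"
  proof -
    have "(Q *v x) \<bullet> (Q *v x) = (x v* transpose Q) \<bullet> (Q *v x)" by simp
    also have "\<dots> = x \<bullet> (transpose Q *v (Q *v x))" by (rule dot_lmul_matrix)
    also have "\<dots> = x \<bullet> ((transpose Q ** Q) *v x)" by (simp add: matrix_vector_mul_assoc)
    also have "\<dots> = x \<bullet> x" using assms unfolding orthogonal_matrix by simp
    finally show ?thesis .
  qed
  then show ?thesis by (simp add: norm_eq_sqrt_inner)
qed

context
  fixes \<sigma> :: "'n \<Rightarrow> 'n \<Rightarrow> real^'d::finite^'d"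
  assumes conn: "connection w \<sigma>"
begin

lemma orth_sigma: "w x y > 0 \<Longrightarrow> orthogonal_matrix (\<sigma> x y)"
  using conn unfolding connection_def by blast

lemma pathhol_orth: "pathprob w x vs \<noteq> 0 \<Longrightarrow> orthogonal_matrix (pathhol \<sigma> x vs)"
proof (induction vs arbitrary: x)
  case Nil then show ?case by (simp add: orthogonal_matrix_id)
next
  case (Cons y vs)
  then have "tprob w x y \<noteq> 0" "pathprob w y vs \<noteq> 0" by auto
  then have "w x y > 0" unfolding tprob_def using w_nonneg[OF wg, of x y]
    by (metis div_0 less_eq_real_def)
  then show ?case using Cons \<open>pathprob w y vs \<noteq> 0\<close>
    by (simp add: orthogonal_matrix_mul orth_sigma)
qed

lemma Aser_norm: "norm (Aser w \<sigma> x b k m) \<le> real CARD('d) * aser w x b k m"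
proof -
  have "norm (Aser w \<sigma> x b k m) \<le> (\<Sum>vs\<in>hitpaths b k m. norm (pathprob w x vs *\<^sub>R pathhol \<sigma> x vs))"
    unfolding Aser_def by (rule norm_sum)
  also have "\<dots> \<le> (\<Sum>vs\<in>hitpaths b k m. real CARD('d) * pathprob w x vs)"
  proof (rule sum_mono)
    fix vs
    show "norm (pathprob w x vs *\<^sub>R pathhol \<sigma> x vs) \<le> real CARD('d) * pathprob w x vs"
    proof (cases "pathprob w x vs = 0")
      case True then show ?thesis by simp
    next
      case False
      have "norm (pathprob w x vs *\<^sub>R pathhol \<sigma> x vs) = pathprob w x vs * norm (pathhol \<sigma> x vs)"
        using pathprob_nonneg by simp
      also have "\<dots> \<le> pathprob w x vs * real CARD('d)"
        by (rule mult_left_mono[OF orth_norm_le[OF pathhol_orth[OF False]] pathprob_nonneg])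
      finally show ?thesis by (simp add: mult.commute)
    qed
  qed
  also have "\<dots> = real CARD('d) * aser w x b k m"
    unfolding aser_def by (simp add: sum_distrib_left)
  finally show ?thesis .
qed

lemma summable_Aser: "summable (Aser w \<sigma> x b k)"
  by (rule summable_comparison_test'[OF summable_mult[OF summable_aser, of "real CARD('d)"] Aser_norm])

lemma bl_mult: "bounded_linear (\<lambda>B. t *\<^sub>R (Q ** (B::real^'d^'d)) :: real^'d^'d)"
proof -
  have "linear (\<lambda>B. t *\<^sub>R (Q ** (B::real^'d^'d)) :: real^'d^'d)"
    by (rule linearI) (simp_all add: matrix_add_ldistrib matrix_mul_scaleR_right scaleR_add_right)
  then show ?thesis by (simp add: linear_conv_bounded_linear)
qed

lemma hser_step: "hser w \<sigma> x b k = tprob w x b *\<^sub>R \<sigma> x b + (\<Sum>y\<in>- {b, k}. tprob w x y *\<^sub>R (\<sigma> x y ** hser w \<sigma> y b k))"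
proof -
  have s1: "(\<lambda>m. if m = 0 then tprob w x b *\<^sub>R \<sigma> x b else 0) sums (tprob w x b *\<^sub>R \<sigma> x b)"
    using sums_single[of 0 "\<lambda>_. tprob w x b *\<^sub>R \<sigma> x b"] by simp
  have s2: "(\<lambda>m. \<Sum>y\<in>- {b, k}. tprob w x y *\<^sub>R (\<sigma> x y ** Aser w \<sigma> y b k m)) sums
       (\<Sum>y\<in>- {b, k}. tprob w x y *\<^sub>R (\<sigma> x y ** hser w \<sigma> y b k))"
  proof (rule sums_sum)
    fix y
    show "(\<lambda>m. tprob w x y *\<^sub>R (\<sigma> x y ** Aser w \<sigma> y b k m)) sums (tprob w x y *\<^sub>R (\<sigma> x y ** hser w \<sigma> y b k))"
      using bounded_linear.sums[OF bl_mult[of "tprob w x y" "\<sigma> x y"], OF summable_sums[OF summable_Aser]]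
      unfolding hser_def .
  qed
  have "(\<lambda>m. Aser w \<sigma> x b k (Suc m)) sums (tprob w x b *\<^sub>R \<sigma> x b + (\<Sum>y\<in>- {b, k}. tprob w x y *\<^sub>R (\<sigma> x y ** hser w \<sigma> y b k)))"
    unfolding Aser_Suc by (rule sums_add[OF s1 s2])
  then have "Aser w \<sigma> x b k sums (tprob w x b *\<^sub>R \<sigma> x b + (\<Sum>y\<in>- {b, k}. tprob w x y *\<^sub>R (\<sigma> x y ** hser w \<sigma> y b k)))"
    by (simp add: sums_Suc_iff)
  then show ?thesis unfolding hser_def by (rule sums_unique[symmetric])
qed

lemma hser_zero: "hitprob w x b k = 0 \<Longrightarrow> hser w \<sigma> x b k = 0"
proof -
  assume "hitprob w x b k = 0"
  then have "\<forall>m. aser w x b k m = 0"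
    unfolding hitprob_aser using suminf_eq_zero_iff[OF summable_aser aser_nonneg] by blast
  then have "\<And>m. Aser w \<sigma> x b k m = 0" using Aser_norm
    by (metis mult_zero_right norm_le_zero_iff)
  then have "Aser w \<sigma> x b k = (\<lambda>_. 0)" by (intro ext)
  then show ?thesis unfolding hser_def by simp
qed

lemma hitprob_Omega: "hitprob w x b k *\<^sub>R Omega1 w \<sigma> x b k = hser w \<sigma> x b k"
  unfolding Omega1_hser
  by (cases "hitprob w x b k = 0") (simp_all add: hser_zero)

end
end

lemma mm_add_r: "((A::real^'m^'n) + B) ** (C::real^'p^'m) = A ** C + B ** C"
  by (simp add: vec_eq_iff matrix_matrix_mult_def sum.distrib distrib_right)
lemma mm_diff_r: "((A::real^'m^'n) - B) ** (C::real^'p^'m) = A ** C - B ** C"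
  by (simp add: vec_eq_iff matrix_matrix_mult_def sum_subtractf left_diff_distrib)
lemma mm_diff_l: "(C::real^'m^'n) ** ((A::real^'p^'m) - B) = C ** A - C ** B"
  by (simp add: vec_eq_iff matrix_matrix_mult_def sum_subtractf right_diff_distrib)
lemma transpose_diff: "transpose ((A::real^'n^'n) - B) = transpose A - transpose B"
  by (simp add: vec_eq_iff transpose_def)

lemma mp_unique:
  fixes A X Y :: "real^'n::finite^'n"
  assumes x1: "A ** X ** A = A" and x2: "X ** A ** X = X" and x3: "transpose (A ** X) = A ** X"
    and x4: "transpose (X ** A) = X ** A"
    and y1: "A ** Y ** A = A" and y2: "Y ** A ** Y = Y" and y3: "transpose (A ** Y) = A ** Y"
    and y4: "transpose (Y ** A) = Y ** A"
  shows "X = Y"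
proof -
  have "X = X ** (A ** X)" using x2 by (simp add: matrix_mul_assoc)
  also have "\<dots> = X ** transpose (A ** X)" using x3 by simp
  also have "\<dots> = X ** transpose X ** transpose A" by (simp add: matrix_transpose_mul matrix_mul_assoc)
  also have "\<dots> = X ** transpose X ** transpose (A ** Y ** A)" using y1 by simp
  also have "\<dots> = X ** (transpose (A ** X) ** transpose (A ** Y))"
    by (simp add: matrix_transpose_mul matrix_mul_assoc)
  also have "\<dots> = X ** (A ** X) ** (A ** Y)" using x3 y3 by (simp add: matrix_mul_assoc)
  also have "\<dots> = X ** A ** Y" using x2 by (simp add: matrix_mul_assoc)
  finally have X: "X = X ** A ** Y" .
  have "Y = (Y ** A) ** Y" using y2 by (simp add: matrix_mul_assoc)
  also have "\<dots> = transpose (Y ** A) ** Y" using y4 by simp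
  also have "\<dots> = transpose A ** transpose Y ** Y" by (simp add: matrix_transpose_mul)
  also have "\<dots> = transpose (A ** X ** A) ** transpose Y ** Y" using x1 by simp
  also have "\<dots> = (transpose (X ** A) ** transpose (Y ** A)) ** Y"
    by (simp add: matrix_transpose_mul matrix_mul_assoc)
  also have "\<dots> = (X ** A) ** (Y ** A) ** Y" using x4 y4 by simp
  also have "\<dots> = X ** A ** Y" using y2 by (metis matrix_mul_assoc)
  finally have Y: "Y = X ** A ** Y" .
  show ?thesis using X Y by simp
qed

definition tm :: "('n::finite \<Rightarrow> 'n \<Rightarrow> real) \<Rightarrow> real^'n^'n" where
  "tm F = (\<chi> x y. F x y)"

lemma tm_nth [simp]: "tm F $ x $ y = F x y" unfolding tm_def by simp

lemma tm_inj: "tm F = tm G \<longleftrightarrow> F = G"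
  by (auto simp: vec_eq_iff fun_eq_iff)

lemma mmul_tm: "mmul UNIV F G x y = (tm F ** tm G) $ x $ y"
  by (simp add: mmul_def matrix_matrix_mult_def)

lemma pinv_UNIV_conds:
  "((\<forall>x y. (x \<notin> UNIV \<or> y \<notin> UNIV) \<longrightarrow> X x y = 0) \<and>
     (\<forall>x\<in>UNIV. \<forall>y\<in>UNIV. mmul UNIV (mmul UNIV A X) A x y = A x y) \<and>
     (\<forall>x\<in>UNIV. \<forall>y\<in>UNIV. mmul UNIV (mmul UNIV X A) X x y = X x y) \<and>
     (\<forall>x\<in>UNIV. \<forall>y\<in>UNIV. mmul UNIV A X x y = mmul UNIV A X y x) \<and>
     (\<forall>x\<in>UNIV. \<forall>y\<in>UNIV. mmul UNIV X A x y = mmul UNIV X A y x))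
   \<longleftrightarrow> (tm A ** tm X ** tm A = tm A \<and> tm X ** tm A ** tm X = tm X \<and>
        transpose (tm A ** tm X) = tm A ** tm X \<and> transpose (tm X ** tm A) = tm X ** tm A)"
  for A X :: "'n::finite \<Rightarrow> 'n \<Rightarrow> real"
proof -
  have e1: "tm (mmul UNIV F G) = tm F ** tm G" for F G :: "'n \<Rightarrow> 'n \<Rightarrow> real"
    by (simp add: vec_eq_iff mmul_tm)
  show ?thesis
    by (simp add: e1 mmul_tm vec_eq_iff transpose_def) auto
qed

lemma pinv_UNIV:
  fixes A :: "'n::finite \<Rightarrow> 'n \<Rightarrow> real" and X0 :: "real^'n^'n"
  assumes "tm A ** X0 ** tm A = tm A" "X0 ** tm A ** X0 = X0"
     "transpose (tm A ** X0) = tm A ** X0" "transpose (X0 ** tm A) = X0 ** tm A"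
  shows "pinv UNIV A = (\<lambda>x y. X0 $ x $ y)"
proof -
  have tX: "tm (\<lambda>x y. X0 $ x $ y) = X0" by (simp add: vec_eq_iff)
  show ?thesis
    unfolding pinv_def
  proof (rule the_equality)
    show "(\<forall>x y. (x \<notin> UNIV \<or> y \<notin> UNIV) \<longrightarrow> (\<lambda>x y. X0 $ x $ y) x y = 0) \<and>
     (\<forall>x\<in>UNIV. \<forall>y\<in>UNIV. mmul UNIV (mmul UNIV A (\<lambda>x y. X0 $ x $ y)) A x y = A x y) \<and>
     (\<forall>x\<in>UNIV. \<forall>y\<in>UNIV. mmul UNIV (mmul UNIV (\<lambda>x y. X0 $ x $ y) A) (\<lambda>x y. X0 $ x $ y) x y = (\<lambda>x y. X0 $ x $ y) x y) \<and>
     (\<forall>x\<in>UNIV. \<forall>y\<in>UNIV. mmul UNIV A (\<lambda>x y. X0 $ x $ y) x y = mmul UNIV A (\<lambda>x y. X0 $ x $ y) y x) \<and>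
     (\<forall>x\<in>UNIV. \<forall>y\<in>UNIV. mmul UNIV (\<lambda>x y. X0 $ x $ y) A x y = mmul UNIV (\<lambda>x y. X0 $ x $ y) A y x)"
      unfolding pinv_UNIV_conds tX using assms by simp
  next
    fix X
    assume "(\<forall>x y. (x \<notin> UNIV \<or> y \<notin> UNIV) \<longrightarrow> X x y = 0) \<and>
     (\<forall>x\<in>UNIV. \<forall>y\<in>UNIV. mmul UNIV (mmul UNIV A X) A x y = A x y) \<and>
     (\<forall>x\<in>UNIV. \<forall>y\<in>UNIV. mmul UNIV (mmul UNIV X A) X x y = X x y) \<and>
     (\<forall>x\<in>UNIV. \<forall>y\<in>UNIV. mmul UNIV A X x y = mmul UNIV A X y x) \<and>
     (\<forall>x\<in>UNIV. \<forall>y\<in>UNIV. mmul UNIV X A x y = mmul UNIV X A y x)"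
    then have c: "tm A ** tm X ** tm A = tm A \<and> tm X ** tm A ** tm X = tm X \<and>
        transpose (tm A ** tm X) = tm A ** tm X \<and> transpose (tm X ** tm A) = tm X ** tm A"
      unfolding pinv_UNIV_conds .
    have "tm X = X0" using mp_unique[of "tm A" "tm X" X0] c assms by blast
    then show "X = (\<lambda>x y. X0 $ x $ y)" using tX tm_inj by metis
  qed
qed

context
  fixes w :: "'n::finite \<Rightarrow> 'n \<Rightarrow> real" and i j :: 'n
  assumes wg: "weighted_graph w" and ij: "i \<noteq> j"
begin

lemma two: "\<exists>a b::'n. a \<noteq> b" using ij by blast

lemmas tnn = tprob_nonneg[OF wg]
lemmas hstep = hitprob_step[OF wg two]
lemmas dpos = deg_pos'[OF wg two]
lemmas tsum = tprob_sum'[OF wg two]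

lemma ji_commute: "- {j, i} = - {i, j}" by auto

lemma deg_mult_sum: "deg w r * (\<Sum>y\<in>UNIV. tprob w r y * f y) = (\<Sum>y\<in>UNIV. w r y * f y)"
  using dpos[of r] by (simp add: sum_distrib_left tprob_def)

lemma recurrence: "hitprob w x i j + hitprob w x j i = 1"
proof -
  define g where "g x = (if x \<in> {i, j} then 0 else hitprob w x i j + hitprob w x j i - 1)" for x
  have gsum: "hitprob w r i j + hitprob w r j i = 1 + (\<Sum>y\<in>UNIV. tprob w r y * g y)" for r
  proof -
    have "hitprob w r i j + hitprob w r j i = tprob w r i + tprob w r j
       + (\<Sum>y\<in>- {i, j}. tprob w r y * (hitprob w y i j + hitprob w y j i))"
      using hstep[of r i j] hstep[of r j i] unfolding ji_commute
      by (simp add: sum.distrib distrib_left)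
    also have "\<dots> = tprob w r i + tprob w r j + (\<Sum>y\<in>- {i, j}. tprob w r y)
       + (\<Sum>y\<in>- {i, j}. tprob w r y * g y)"
      by (simp add: g_def sum.distrib[symmetric] algebra_simps)
    also have "\<dots> = 1 + (\<Sum>y\<in>UNIV. tprob w r y * g y)"
      using sum_UNIV_split2[OF ij, of "tprob w r"] sum_UNIV_split2[OF ij, of "\<lambda>y. tprob w r y * g y"] tsum[of r]
      by (simp add: g_def)
    finally show ?thesis .
  qed
  have "g r = 0" for r
  proof (rule scalar_unique[OF wg, of "- {i, j}"])
    show "\<And>r. r \<notin> - {i, j} \<Longrightarrow> g r = 0" by (simp add: g_def)
    show "- {i, j} \<noteq> UNIV" by auto
    fix r assume r: "r \<in> - {i, j}"
    have "g r = (\<Sum>y\<in>UNIV. tprob w r y * g y)" using r gsum[of r] by (simp add: g_def)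
    then show "deg w r * g r = (\<Sum>y\<in>UNIV. w r y * g y)" using deg_mult_sum by simp
  qed
  then show ?thesis using gsum[of x] by simp
qed

definition phi :: "'n \<Rightarrow> real" where
  "phi x = (if x = i then 1 else if x = j then 0 else hitprob w x i j)"

lemma phi_sum: "(\<Sum>y\<in>UNIV. tprob w r y * phi y) = hitprob w r i j"
proof -
  have "(\<Sum>y\<in>UNIV. tprob w r y * phi y) = tprob w r i + (\<Sum>y\<in>- {i, j}. tprob w r y * phi y)"
    using sum_UNIV_split2[OF ij, of "\<lambda>y. tprob w r y * phi y"] ij by (simp add: phi_def)
  also have "(\<Sum>y\<in>- {i, j}. tprob w r y * phi y) = (\<Sum>y\<in>- {i, j}. tprob w r y * hitprob w y i j)"
    by (rule sum.cong) (auto simp: phi_def)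
  finally show ?thesis using hstep[of r i j] by simp
qed

lemma hit_pos: "hitprob w i j i > 0"
proof (rule ccontr)
  assume "\<not> hitprob w i j i > 0"
  then have z: "hitprob w i j i = 0" using hitprob_nonneg[OF wg two, of i j i] by simp
  then have h1: "hitprob w i i j = 1" using recurrence[of i] by simp
  have fmax: "phi y \<le> phi i" for y
    using hitprob_le1[OF wg two] by (simp add: phi_def)
  have "(\<forall>y. phi y = phi i) \<or> (\<exists>y. y \<notin> - {j} \<and> phi y = phi i)"
  proof (rule max_closed[OF wg, of phi i "- {j}"])
    show "\<And>y. phi y \<le> phi i" by (rule fmax)
    fix r assume "phi r = phi i" "r \<in> - {j}"
    have "phi r = hitprob w r i j" using h1 \<open>r \<in> - {j}\<close> by (simp add: phi_def)
    then show "deg w r * phi r \<le> (\<Sum>y\<in>UNIV. w r y * phi y)"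
      using deg_mult_sum[of r phi] phi_sum[of r] by simp
  qed
  then show False
  proof
    assume "\<forall>y. phi y = phi i" then have "phi j = phi i" by blast
    then show False using ij by (simp add: phi_def)
  next
    assume "\<exists>y. y \<notin> - {j} \<and> phi y = phi i"
    then show False using ij by (auto simp: phi_def)
  qed
qed

definition Lg :: "real^'n^'n" where "Lg = tm (graph_laplacian w)"

lemma Lg_row: "(\<Sum>y\<in>UNIV. graph_laplacian w x y) = 0"
  unfolding graph_laplacian_def by (simp add: sum_subtractf deg_def)

lemma Lg_col: "(\<Sum>x\<in>UNIV. graph_laplacian w x y) = 0"
  unfolding graph_laplacian_def by (simp add: sum_subtractf deg_def w_sym[OF wg, of _ y])

lemma Lg_sym: "transpose Lg = Lg"
  by (simp add: Lg_def vec_eq_iff transpose_def graph_laplacian_def w_sym[OF wg])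

lemma Lphi: "(Lg *v (\<chi> x. phi x)) $ x = deg w x * (phi x - hitprob w x i j)"
proof -
  have "(Lg *v (\<chi> x. phi x)) $ x = (\<Sum>y\<in>UNIV. graph_laplacian w x y * phi y)"
    by (simp add: Lg_def matrix_vector_mult_def)
  also have "\<dots> = (\<Sum>y\<in>UNIV. (if x = y then deg w x * phi y else 0) - w x y * phi y)"
    by (rule sum.cong) (simp_all add: graph_laplacian_def left_diff_distrib)
  also have "\<dots> = deg w x * phi x - (\<Sum>y\<in>UNIV. w x y * phi y)"
    by (simp add: sum_subtractf)
  also have "\<dots> = deg w x * (phi x - hitprob w x i j)"
    using deg_mult_sum[of x phi] phi_sum[of x] by (simp add: right_diff_distrib)
  finally show ?thesis .
qed

lemma Lphi_sum: "(\<Sum>x\<in>UNIV. (Lg *v (\<chi> x. phi x)) $ x) = 0"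
proof -
  have "(\<Sum>x\<in>UNIV. (Lg *v (\<chi> x. phi x)) $ x) = (\<Sum>x\<in>UNIV. \<Sum>y\<in>UNIV. graph_laplacian w x y * phi y)"
    by (simp add: Lg_def matrix_vector_mult_def)
  also have "\<dots> = (\<Sum>y\<in>UNIV. (\<Sum>x\<in>UNIV. graph_laplacian w x y) * phi y)"
    by (subst sum.swap) (simp add: sum_distrib_right)
  finally show ?thesis by (simp add: Lg_col)
qed

lemma Lphi_i: "(Lg *v (\<chi> x. phi x)) $ i = deg w i * hitprob w i j i"
proof -
  have hr: "hitprob w i i j = 1 - hitprob w i j i" using recurrence[of i] by simp
  show ?thesis using Lphi[of i] by (simp add: phi_def hr right_diff_distrib)
qed

lemma Lphi_j: "(Lg *v (\<chi> x. phi x)) $ j = - deg w j * hitprob w j i j"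
  using Lphi[of j] ij by (simp add: phi_def)

lemma Lphi_o: "x \<in> - {i, j} \<Longrightarrow> (Lg *v (\<chi> x. phi x)) $ x = 0"
  using Lphi[of x] by (simp add: phi_def)

lemma deg_hit_sym: "deg w i * hitprob w i j i = deg w j * hitprob w j i j"
proof -
  have "0 = (Lg *v (\<chi> x. phi x)) $ i + (Lg *v (\<chi> x. phi x)) $ j"
    using Lphi_sum sum_UNIV_split2[OF ij, of "\<lambda>x. (Lg *v (\<chi> x. phi x)) $ x"] Lphi_o by simp
  then show ?thesis using Lphi_i Lphi_j by simp
qed

lemma gl_apply: "(\<Sum>y\<in>UNIV. graph_laplacian w x y * f y) = deg w x * f x - (\<Sum>y\<in>UNIV. w x y * f y)"
proof -
  have "(\<Sum>y\<in>UNIV. graph_laplacian w x y * f y) = (\<Sum>y\<in>UNIV. (if x = y then deg w x * f y else 0) - w x y * f y)"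
    by (rule sum.cong) (simp_all add: graph_laplacian_def left_diff_distrib)
  also have "\<dots> = deg w x * f x - (\<Sum>y\<in>UNIV. w x y * f y)"
    by (simp add: sum_subtractf)
  finally show ?thesis .
qed

definition Jn :: "real^'n^'n" where "Jn = (\<chi> x y. 1 / real CARD('n))"

lemma Lg_Jn: "Lg ** Jn = 0"
proof -
  have "(\<Sum>k\<in>UNIV. graph_laplacian w x k * (1 / real CARD('n))) = 0" for x
    by (simp add: sum_divide_distrib[symmetric] Lg_row)
  then show ?thesis by (simp add: vec_eq_iff Lg_def Jn_def matrix_matrix_mult_def)
qed

lemma Jn_Lg: "Jn ** Lg = 0"
proof -
  have "(\<Sum>k\<in>UNIV. (1 / real CARD('n)) * graph_laplacian w k y) = 0" for y
    by (simp add: sum_divide_distrib[symmetric] Lg_col)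
  then show ?thesis by (simp add: vec_eq_iff Lg_def Jn_def matrix_matrix_mult_def)
qed

lemma Jn_Jn: "Jn ** Jn = Jn"
  by (simp add: vec_eq_iff Jn_def matrix_matrix_mult_def power2_eq_square)

lemma Jn_sym: "transpose Jn = Jn"
  by (simp add: vec_eq_iff Jn_def transpose_def)

lemma Km_inj: "(Lg + Jn) *v z = 0 \<Longrightarrow> z = 0"
proof -
  assume z0: "(Lg + Jn) *v z = 0"
  let ?n = "real CARD('n)"
  have comp: "((Lg + Jn) *v z) $ x = (\<Sum>y\<in>UNIV. graph_laplacian w x y * z $ y) + (\<Sum>y\<in>UNIV. z $ y) / ?n" for x
    by (simp add: matrix_vector_mult_def Lg_def Jn_def distrib_right sum.distrib sum_divide_distrib)
  have "(\<Sum>x\<in>UNIV. ((Lg + Jn) *v z) $ x) = (\<Sum>x\<in>UNIV. \<Sum>y\<in>UNIV. graph_laplacian w x y * z $ y) + (\<Sum>y\<in>UNIV. z $ y)"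
    by (simp add: comp sum.distrib)
  also have "(\<Sum>x\<in>UNIV. \<Sum>y\<in>UNIV. graph_laplacian w x y * z $ y) = 0"
    by (subst sum.swap) (simp add: sum_distrib_right[symmetric] Lg_col)
  finally have s0: "(\<Sum>y\<in>UNIV. z $ y) = 0" using z0 by simp
  have h: "deg w x * z $ x \<le> (\<Sum>y\<in>UNIV. w x y * z $ y)" for x
    using comp[of x] z0 s0 gl_apply[of x "\<lambda>y. z $ y"] by simp
  obtain a where a: "\<And>y. z $ y \<le> z $ a" using ex_max[OF wg, of "\<lambda>y. z $ y"] by blast
  have "(\<forall>y. z $ y = z $ a) \<or> (\<exists>y. y \<notin> UNIV \<and> z $ y = z $ a)"
  proof (rule max_closed[OF wg, of "\<lambda>y. z $ y" a UNIV])
    show "\<And>y. z $ y \<le> z $ a" by (rule a)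
    fix r show "deg w r * z $ r \<le> (\<Sum>y\<in>UNIV. w r y * z $ y)" by (rule h)
  qed
  then have all: "z $ y = z $ a" for y by blast
  have "(\<Sum>y\<in>UNIV. z $ y) = (\<Sum>y\<in>(UNIV::'n set). z $ a)" by (intro sum.cong refl all)
  then have "(\<Sum>y\<in>UNIV. z $ y) = ?n * z $ a" by simp
  then have "z $ a = 0" using s0 by simp
  then show "z = 0" using all by (simp add: vec_eq_iff)
qed

definition Ki :: "real^'n^'n" where "Ki = (SOME B. B ** (Lg + Jn) = mat 1)"

lemma Ki_left: "Ki ** (Lg + Jn) = mat 1"
proof -
  have "\<exists>B. B ** (Lg + Jn) = mat 1"
    using Km_inj by (simp add: matrix_left_invertible_ker)
  then show ?thesis unfolding Ki_def by (rule someI_ex)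
qed

lemma Ki_right: "(Lg + Jn) ** Ki = mat 1"
  using Ki_left matrix_left_right_inverse by blast

lemma Ki_Jn: "Ki ** Jn = Jn"
proof -
  have "(Lg + Jn) ** Jn = Jn" by (simp add: mm_add_r Lg_Jn Jn_Jn)
  then have "Ki ** ((Lg + Jn) ** Jn) = Ki ** Jn" by simp
  then show ?thesis by (simp add: matrix_mul_assoc Ki_left)
qed

lemma Jn_Ki: "Jn ** Ki = Jn"
proof -
  have "Jn ** (Lg + Jn) = Jn" by (simp add: matrix_add_ldistrib Jn_Lg Jn_Jn)
  then have "(Jn ** (Lg + Jn)) ** Ki = Jn ** Ki" by simp
  then show ?thesis by (simp add: matrix_mul_assoc[symmetric] Ki_right)
qed

definition X0 :: "real^'n^'n" where "X0 = Ki - Jn"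

lemma Lg_X0: "Lg ** X0 = mat 1 - Jn"
proof -
  have "Lg ** X0 = Lg ** Ki" by (simp add: X0_def mm_diff_l Lg_Jn)
  also have "\<dots> = (Lg + Jn) ** Ki - Jn ** Ki" by (simp add: mm_add_r)
  finally show ?thesis by (simp add: Ki_right Jn_Ki)
qed

lemma X0_Lg: "X0 ** Lg = mat 1 - Jn"
proof -
  have "X0 ** Lg = Ki ** Lg" by (simp add: X0_def mm_diff_r Jn_Lg)
  also have "\<dots> = Ki ** (Lg + Jn) - Ki ** Jn" by (simp add: matrix_add_ldistrib)
  finally show ?thesis by (simp add: Ki_left Ki_Jn)
qed

lemma X0_conds: "Lg ** X0 ** Lg = Lg" "X0 ** Lg ** X0 = X0"
  "transpose (Lg ** X0) = Lg ** X0" "transpose (X0 ** Lg) = X0 ** Lg"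
proof -
  show "Lg ** X0 ** Lg = Lg" by (simp add: Lg_X0 mm_diff_r Jn_Lg)
  have "Jn ** X0 = 0" by (simp add: X0_def mm_diff_l Jn_Ki Jn_Jn)
  then show "X0 ** Lg ** X0 = X0" by (simp add: X0_Lg mm_diff_r)
  show "transpose (Lg ** X0) = Lg ** X0" by (simp add: Lg_X0 transpose_diff Jn_sym)
  show "transpose (X0 ** Lg) = X0 ** Lg" by (simp add: X0_Lg transpose_diff Jn_sym)
qed

lemma pinv_Lg: "pinv UNIV (graph_laplacian w) = (\<lambda>x y. X0 $ x $ y)"
  by (rule pinv_UNIV) (simp_all add: Lg_def[symmetric] X0_conds)

lemma eff_cond: "eff_conductance w i j = deg w i * hitprob w i j i"
proof -
  define e where "e = (\<lambda>x. (if x = i then 1 else 0) - (if x = j then 1 else (0::real)))"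
  define ev where "ev = (\<chi> x. e x)"
  define ph where "ph = (\<chi> x. phi x)"
  define dp where "dp = deg w i * hitprob w i j i"
  have dp: "dp > 0" unfolding dp_def using dpos[of i] hit_pos by simp
  have r1: "eff_resistance w i j = ev \<bullet> (X0 *v ev)"
    unfolding eff_resistance_def pinv_Lg Let_def e_def[symmetric] ev_def
    by (simp add: inner_vec_def matrix_vector_mult_def sum_distrib_left mult_ac)
  have Lph: "Lg *v ph = dp *\<^sub>R ev"
  proof -
    have "(Lg *v ph) $ x = dp * e x" for x
    proof -
      consider "x = i" | "x = j" | "x \<in> - {i, j}" by auto
      then show ?thesis
        using Lphi_i Lphi_j Lphi_o[of x] deg_hit_sym ij unfolding ph_def dp_def e_def
        by cases auto
    qed
    then show ?thesis by (simp add: vec_eq_iff ev_def)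
  qed
  have ev: "ev = (1 / dp) *\<^sub>R (Lg *v ph)" using Lph dp by simp
  have adj: "(Lg *v x) \<bullet> y = x \<bullet> (Lg *v y)" for x y
  proof -
    have "(Lg *v x) \<bullet> y = (x v* transpose Lg) \<bullet> y" by simp
    also have "\<dots> = x \<bullet> (transpose Lg *v y)" by (rule dot_lmul_matrix)
    finally show ?thesis using Lg_sym by simp
  qed
  have phe: "ph \<bullet> ev = 1"
  proof -
    have "ph \<bullet> ev = (\<Sum>x\<in>UNIV. phi x * e x)" by (simp add: ph_def ev_def inner_vec_def)
    also have "\<dots> = (\<Sum>x\<in>UNIV. (if x = i then phi x else 0) - (if x = j then phi x else 0))"
      by (rule sum.cong) (auto simp: e_def)
    also have "\<dots> = 1" using ij by (simp add: sum_subtractf phi_def)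
    finally show ?thesis .
  qed
  have "ev \<bullet> (X0 *v ev) = (1 / dp) * (1 / dp) * ((Lg *v ph) \<bullet> (X0 *v (Lg *v ph)))"
    unfolding ev by (simp add: matrix_vector_mult_scaleR)
  also have "(Lg *v ph) \<bullet> (X0 *v (Lg *v ph)) = ph \<bullet> (Lg *v (X0 *v (Lg *v ph)))" by (rule adj)
  also have "Lg *v (X0 *v (Lg *v ph)) = Lg *v ph"
    by (simp add: matrix_vector_mul_assoc matrix_mul_assoc X0_conds(1))
  also have "ph \<bullet> (Lg *v ph) = dp" using phe by (simp add: Lph)
  finally have "eff_resistance w i j = 1 / dp" using r1 dp by simp
  then show ?thesis unfolding eff_conductance_def dp_def by simp
qed

end

lemma mmul_assoc: "mmul S (mmul S A B) C = mmul S A (mmul S B C)"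
proof (rule ext, rule ext)
  fix x y
  have "(\<Sum>z\<in>S. (\<Sum>u\<in>S. A x u * B u z) * C z y) = (\<Sum>z\<in>S. \<Sum>u\<in>S. A x u * B u z * C z y)"
    by (simp add: sum_distrib_right)
  also have "\<dots> = (\<Sum>u\<in>S. \<Sum>z\<in>S. A x u * B u z * C z y)" by (rule sum.swap)
  also have "\<dots> = (\<Sum>u\<in>S. A x u * (\<Sum>z\<in>S. B u z * C z y))"
    by (simp add: sum_distrib_left mult.assoc)
  finally show "mmul S (mmul S A B) C x y = mmul S A (mmul S B C) x y" unfolding mmul_def .
qed

lemma mmul_cong_l: "x \<in> S \<Longrightarrow> (\<And>z. z \<in> S \<Longrightarrow> A x z = A' x z) \<Longrightarrow> mmul S A B x y = mmul S A' B x y"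
  unfolding mmul_def by (rule sum.cong) auto

lemma mmul_cong_r: "y \<in> S \<Longrightarrow> (\<And>z. z \<in> S \<Longrightarrow> B z y = B' z y) \<Longrightarrow> mmul S A B x y = mmul S A B' x y"
  unfolding mmul_def by (rule sum.cong) auto

lemma mmul_delta_l: "finite S \<Longrightarrow> x \<in> S \<Longrightarrow> (\<And>z. z \<in> S \<Longrightarrow> D x z = (if x = z then 1 else 0)) \<Longrightarrow> mmul S D B x y = B x y"
proof -
  assume fin: "finite S" and x: "x \<in> S" and d: "\<And>z. z \<in> S \<Longrightarrow> D x z = (if x = z then 1 else 0)"
  have "mmul S D B x y = (\<Sum>z\<in>S. if x = z then B z y else 0)"
    unfolding mmul_def by (rule sum.cong) (auto simp: d)
  then show ?thesis using fin x by simp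
qed

lemma mmul_delta_r: "finite S \<Longrightarrow> y \<in> S \<Longrightarrow> (\<And>z. z \<in> S \<Longrightarrow> D z y = (if z = y then 1 else 0)) \<Longrightarrow> mmul S B D x y = B x y"
proof -
  assume fin: "finite S" and y: "y \<in> S" and d: "\<And>z. z \<in> S \<Longrightarrow> D z y = (if z = y then 1 else 0)"
  have "mmul S B D x y = (\<Sum>z\<in>S. if z = y then B x z else 0)"
    unfolding mmul_def by (rule sum.cong) (auto simp: d)
  then show ?thesis using fin y by simp
qed

lemma pinv_inverse:
  fixes L N0 :: "'i::finite \<Rightarrow> 'i \<Rightarrow> real"
  assumes out: "\<And>x y. (x \<notin> T \<or> y \<notin> T) \<Longrightarrow> N0 x y = 0"
    and LN: "\<And>x y. x \<in> T \<Longrightarrow> y \<in> T \<Longrightarrow> mmul T L N0 x y = (if x = y then 1 else 0)"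
    and NL: "\<And>x y. x \<in> T \<Longrightarrow> y \<in> T \<Longrightarrow> mmul T N0 L x y = (if x = y then 1 else 0)"
  shows "pinv T L = N0"
  unfolding pinv_def
proof (rule the_equality)
  have fin: "finite T" by simp
  show "(\<forall>x y. (x \<notin> T \<or> y \<notin> T) \<longrightarrow> N0 x y = 0) \<and>
     (\<forall>x\<in>T. \<forall>y\<in>T. mmul T (mmul T L N0) L x y = L x y) \<and>
     (\<forall>x\<in>T. \<forall>y\<in>T. mmul T (mmul T N0 L) N0 x y = N0 x y) \<and>
     (\<forall>x\<in>T. \<forall>y\<in>T. mmul T L N0 x y = mmul T L N0 y x) \<and>
     (\<forall>x\<in>T. \<forall>y\<in>T. mmul T N0 L x y = mmul T N0 L y x)"
    using out LN NL by (auto simp: mmul_delta_l[OF fin])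
next
  fix X
  assume "(\<forall>x y. (x \<notin> T \<or> y \<notin> T) \<longrightarrow> X x y = 0) \<and>
     (\<forall>x\<in>T. \<forall>y\<in>T. mmul T (mmul T L X) L x y = L x y) \<and>
     (\<forall>x\<in>T. \<forall>y\<in>T. mmul T (mmul T X L) X x y = X x y) \<and>
     (\<forall>x\<in>T. \<forall>y\<in>T. mmul T L X x y = mmul T L X y x) \<and>
     (\<forall>x\<in>T. \<forall>y\<in>T. mmul T X L x y = mmul T X L y x)"
  then have Xout: "\<And>x y. (x \<notin> T \<or> y \<notin> T) \<Longrightarrow> X x y = 0"
    and X1: "\<And>x y. x \<in> T \<Longrightarrow> y \<in> T \<Longrightarrow> mmul T (mmul T L X) L x y = L x y" by auto
  have fin: "finite T" by simp
  have "X x y = N0 x y" if x: "x \<in> T" and y: "y \<in> T" for x y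
  proof -
    have "X x y = mmul T (mmul T N0 L) X x y"
      by (rule mmul_delta_l[OF fin x, symmetric]) (simp add: NL x)
    also have "\<dots> = mmul T (mmul T (mmul T N0 L) X) (mmul T L N0) x y"
      by (rule mmul_delta_r[OF fin y, symmetric]) (simp add: LN y)
    also have "\<dots> = mmul T (mmul T N0 (mmul T (mmul T L X) L)) N0 x y"
      by (simp add: mmul_assoc)
    also have "\<dots> = mmul T (mmul T N0 L) N0 x y"
    proof (rule mmul_cong_l[OF x])
      fix z assume z: "z \<in> T"
      show "mmul T N0 (mmul T (mmul T L X) L) x z = mmul T N0 L x z"
        by (rule mmul_cong_r[OF z]) (simp add: X1 z)
    qed
    also have "\<dots> = N0 x y"
      by (rule mmul_delta_l[OF fin x]) (simp add: NL x)
    finally show ?thesis .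
  qed
  then show "X = N0"
  proof -
    assume h: "\<And>x y. x \<in> T \<Longrightarrow> y \<in> T \<Longrightarrow> X x y = N0 x y"
    show "X = N0"
    proof (rule ext, rule ext)
      fix x y show "X x y = N0 x y"
        using h[of x y] Xout[of x y] out[of x y] by (cases "x \<in> T \<and> y \<in> T") auto
    qed
  qed
qed

lemma delta2: "(\<Sum>y\<in>UNIV. \<Sum>c\<in>UNIV. if y = r \<and> c = a then g y c else (0::real)) = g (r::'a::finite) (a::'b::finite)"
proof -
  have "(\<Sum>c\<in>UNIV. if y = r \<and> c = a then g y c else 0) = (if y = r then g y a else 0)" for y
    by (cases "y = r") auto
  then show ?thesis by simp
qed

lemma sum_pair: "(\<Sum>q\<in>(UNIV::('a::finite \<times> 'b::finite) set). F q) = (\<Sum>y\<in>UNIV. \<Sum>c\<in>UNIV. F (y, c))"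
  by (simp add: sum.cartesian_product)

lemma sum_pairT: "(\<Sum>q\<in>(U \<times> (UNIV::'b::finite set)). F q) = (\<Sum>y\<in>U. \<Sum>c\<in>UNIV. F (y, c))"
  by (simp add: sum.cartesian_product)

context
  fixes w :: "'n::finite \<Rightarrow> 'n \<Rightarrow> real" and \<sigma> :: "'n \<Rightarrow> 'n \<Rightarrow> real^'d::finite^'d"
    and i j :: 'n
  assumes wg: "weighted_graph w" and conn: "connection w \<sigma>" and ij: "i \<noteq> j"
begin

lemma tw: "\<exists>a b::'n. a \<noteq> b" using ij by blast

lemma L_eq: "conn_laplacian w \<sigma> (x, a) (y, c) = (if x = y \<and> a = c then deg w x else 0) - w x y * \<sigma> x y $ a $ c"
proof -
  have "w x y = 0" if "\<not> w x y > 0" using that w_nonneg[OF wg, of x y] by simp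
  then show ?thesis unfolding conn_laplacian_def using w_diag[OF wg, of x] by auto
qed

lemma vec_unique:
  fixes x :: "'n \<Rightarrow> real^'d"
  assumes out: "\<And>r. r \<notin> U \<Longrightarrow> x r = 0" and U: "U \<noteq> UNIV"
    and harm: "\<And>r. r \<in> U \<Longrightarrow> deg w r *\<^sub>R x r = (\<Sum>y\<in>UNIV. w r y *\<^sub>R (\<sigma> r y *v x y))"
  shows "x r = 0"
proof -
  obtain u where uU: "u \<notin> U" using U by blast
  define f where "f y = norm (x y)" for y
  obtain a where a: "\<And>y. f y \<le> f a" using ex_max[OF wg, of f] by blast
  have sub: "deg w r * f r \<le> (\<Sum>y\<in>UNIV. w r y * f y)" if r: "r \<in> U" for r
  proof -
    have "deg w r * f r = norm (deg w r *\<^sub>R x r)" using deg_nonneg[OF wg, of r] by (simp add: f_def)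
    also have "\<dots> = norm (\<Sum>y\<in>UNIV. w r y *\<^sub>R (\<sigma> r y *v x y))" using harm[OF r] by simp
    also have "\<dots> \<le> (\<Sum>y\<in>UNIV. norm (w r y *\<^sub>R (\<sigma> r y *v x y)))" by (rule norm_sum)
    also have "\<dots> = (\<Sum>y\<in>UNIV. w r y * f y)"
    proof (rule sum.cong[OF refl])
      fix y
      show "norm (w r y *\<^sub>R (\<sigma> r y *v x y)) = w r y * f y"
      proof (cases "w r y > 0")
        case True
        then show ?thesis using norm_orth_mult[OF wg tw orth_sigma[OF wg tw conn True]] by (simp add: f_def)
      next
        case False
        then have "w r y = 0" using w_nonneg[OF wg, of r y] by simp
        then show ?thesis by simp
      qed
    qed
    finally show ?thesis .
  qed
  have "(\<forall>y. f y = f a) \<or> (\<exists>y. y \<notin> U \<and> f y = f a)"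
  proof (rule max_closed[OF wg, of f a U])
    show "\<And>y. f y \<le> f a" by (rule a)
    fix r assume "f r = f a" and r: "r \<in> U"
    show "deg w r * f r \<le> (\<Sum>y\<in>UNIV. w r y * f y)" by (rule sub[OF r])
  qed
  then have "f a = 0" using out uU by (metis f_def norm_zero)
  then have "f r \<le> 0" using a by metis
  then show ?thesis by (simp add: f_def)
qed

definition TT :: "('n \<times> 'd) set" where "TT = - ({i, j} \<times> UNIV)"
definition UU :: "'n set" where "UU = - {i, j}"

lemma TT_eq: "TT = UU \<times> UNIV" unfolding TT_def UU_def by auto

abbreviation "LL \<equiv> conn_laplacian w \<sigma>"

definition Mp :: "real^('n \<times> 'd)^('n \<times> 'd)" where
  "Mp = (\<chi> p q. if p \<in> TT \<and> q \<in> TT then LL p q else if p = q then 1 else 0)"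

lemma Mp_inj: "Mp *v z = 0 \<Longrightarrow> z = 0"
proof -
  assume z0: "Mp *v z = 0"
  have zout: "z $ p = 0" if p: "p \<notin> TT" for p
  proof -
    have "(Mp *v z) $ p = (\<Sum>q\<in>UNIV. (if p = q then 1 else 0) * z $ q)"
      using p by (simp add: Mp_def matrix_vector_mult_def)
    also have "\<dots> = (\<Sum>q\<in>UNIV. if p = q then z $ q else 0)" by (rule sum.cong) auto
    also have "\<dots> = z $ p" by simp
    finally show ?thesis using z0 by simp
  qed
  define x where "x r = (\<chi> a. z $ (r, a))" for r
  have xout: "x r = 0" if "r \<notin> UU" for r
    using that zout by (simp add: x_def vec_eq_iff TT_eq)
  have harm: "deg w r *\<^sub>R x r = (\<Sum>y\<in>UNIV. w r y *\<^sub>R (\<sigma> r y *v x y))" if r: "r \<in> UU" for r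
  proof -
    have "(deg w r *\<^sub>R x r) $ a = (\<Sum>y\<in>UNIV. w r y *\<^sub>R (\<sigma> r y *v x y)) $ a" for a
    proof -
      have pT: "(r, a) \<in> TT" using r by (simp add: TT_eq)
      have "0 = (Mp *v z) $ (r, a)" using z0 by simp
      also have "\<dots> = (\<Sum>q\<in>UNIV. LL (r, a) q * z $ q)"
        unfolding matrix_vector_mult_def Mp_def using pT zout
        by (auto intro!: sum.cong)
      also have "\<dots> = (\<Sum>y\<in>UNIV. \<Sum>c\<in>UNIV. ((if r = y \<and> a = c then deg w r else 0) - w r y * \<sigma> r y $ a $ c) * z $ (y, c))"
        by (simp add: sum_pair L_eq)
      also have "\<dots> = (\<Sum>y\<in>UNIV. \<Sum>c\<in>UNIV. (if y = r \<and> c = a then deg w r * z $ (y, c) else 0) - w r y * (\<sigma> r y $ a $ c * z $ (y, c)))"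
        by (intro sum.cong refl) (auto simp: algebra_simps)
      also have "\<dots> = deg w r * z $ (r, a) - (\<Sum>y\<in>UNIV. w r y * (\<Sum>c\<in>UNIV. \<sigma> r y $ a $ c * z $ (y, c)))"
        by (simp only: sum_subtractf delta2[of r a "\<lambda>y c. deg w r * z $ (y, c)"]) (simp add: sum_distrib_left)
      finally show ?thesis
        by (simp add: x_def matrix_vector_mult_def)
    qed
    then show ?thesis by (simp add: vec_eq_iff)
  qed
  have "x r = 0" for r
    by (rule vec_unique[of UU]) (auto simp: xout harm UU_def)
  then have "z $ p = 0" for p
    by (cases p) (simp add: x_def vec_eq_iff)
  then show "z = 0" by (simp add: vec_eq_iff)
qed

definition Nm :: "real^('n \<times> 'd)^('n \<times> 'd)" where "Nm = (SOME B. B ** Mp = mat 1)"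

lemma Nm_left: "Nm ** Mp = mat 1"
proof -
  have "\<exists>B. B ** Mp = mat 1" using Mp_inj by (simp add: matrix_left_invertible_ker)
  then show ?thesis unfolding Nm_def by (rule someI_ex)
qed

lemma Nm_right: "Mp ** Nm = mat 1"
  using Nm_left matrix_left_right_inverse by blast

definition N0 :: "('n \<times> 'd) \<Rightarrow> ('n \<times> 'd) \<Rightarrow> real" where
  "N0 p q = (if p \<in> TT \<and> q \<in> TT then Nm $ p $ q else 0)"

lemma LN0: "p \<in> TT \<Longrightarrow> q \<in> TT \<Longrightarrow> mmul TT LL N0 p q = (if p = q then 1 else 0)"
proof -
  assume p: "p \<in> TT" and q: "q \<in> TT"
  have "mmul TT LL N0 p q = (\<Sum>r\<in>TT. LL p r * Nm $ r $ q)"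
    unfolding mmul_def using q by (auto simp: N0_def intro!: sum.cong)
  also have "\<dots> = (\<Sum>r\<in>UNIV. if r \<in> TT then LL p r * Nm $ r $ q else 0)"
    by (rule sum.mono_neutral_cong_left) auto
  also have "\<dots> = (Mp ** Nm) $ p $ q"
    unfolding matrix_matrix_mult_def Mp_def using p by (auto intro!: sum.cong)
  finally show ?thesis by (simp add: Nm_right mat_def)
qed

lemma N0L: "p \<in> TT \<Longrightarrow> q \<in> TT \<Longrightarrow> mmul TT N0 LL p q = (if p = q then 1 else 0)"
proof -
  assume p: "p \<in> TT" and q: "q \<in> TT"
  have "mmul TT N0 LL p q = (\<Sum>r\<in>TT. Nm $ p $ r * LL r q)"
    unfolding mmul_def using p by (auto simp: N0_def intro!: sum.cong)
  also have "\<dots> = (\<Sum>r\<in>UNIV. if r \<in> TT then Nm $ p $ r * LL r q else 0)"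
    by (rule sum.mono_neutral_cong_left) auto
  also have "\<dots> = (Nm ** Mp) $ p $ q"
    unfolding matrix_matrix_mult_def Mp_def using q by (auto intro!: sum.cong)
  finally show ?thesis by (simp add: Nm_left mat_def)
qed

lemma pinv_TT: "pinv TT LL = N0"
  by (rule pinv_inverse) (auto simp: N0_def LN0 N0L)


abbreviation "HH y \<equiv> hser w \<sigma> y i j"

lemma Lsum: "(\<Sum>r\<in>TT. LL (x, a) r * g r) = (if x \<in> UU then deg w x * g (x, a) else 0)
    - (\<Sum>y\<in>UU. w x y * (\<Sum>c\<in>UNIV. \<sigma> x y $ a $ c * g (y, c)))"
proof -
  have "(\<Sum>r\<in>TT. LL (x, a) r * g r) = (\<Sum>y\<in>UU. \<Sum>c\<in>UNIV. LL (x, a) (y, c) * g (y, c))"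
    unfolding TT_eq by (rule sum_pairT)
  also have "\<dots> = (\<Sum>y\<in>UU. (if y = x then deg w x * g (x, a) else 0) - w x y * (\<Sum>c\<in>UNIV. \<sigma> x y $ a $ c * g (y, c)))"
  proof (rule sum.cong[OF refl])
    fix y
    have "(\<Sum>c\<in>UNIV. LL (x, a) (y, c) * g (y, c)) = (\<Sum>c\<in>UNIV. (if y = x \<and> c = a then deg w x * g (y, c) else 0) - w x y * (\<sigma> x y $ a $ c * g (y, c)))"
      by (rule sum.cong[OF refl]) (auto simp: L_eq algebra_simps)
    also have "\<dots> = (if y = x then deg w x * g (x, a) else 0) - w x y * (\<Sum>c\<in>UNIV. \<sigma> x y $ a $ c * g (y, c))"
      by (cases "y = x") (auto simp: sum_subtractf sum_distrib_left sum_negf)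
    finally show "(\<Sum>c\<in>UNIV. LL (x, a) (y, c) * g (y, c)) = (if y = x then deg w x * g (x, a) else 0) - w x y * (\<Sum>c\<in>UNIV. \<sigma> x y $ a $ c * g (y, c))" .
  qed
  also have "\<dots> = (if x \<in> UU then deg w x * g (x, a) else 0) - (\<Sum>y\<in>UU. w x y * (\<Sum>c\<in>UNIV. \<sigma> x y $ a $ c * g (y, c)))"
    by (simp add: sum_subtractf)
  finally show ?thesis .
qed

lemma Hentry: "HH x $ e $ b = tprob w x i * \<sigma> x i $ e $ b + (\<Sum>y\<in>UU. tprob w x y * (\<Sum>c\<in>UNIV. \<sigma> x y $ e $ c * HH y $ c $ b))"
  using arg_cong[OF hser_step[OF wg tw conn, of x i j], of "\<lambda>M. M $ e $ b"]
  by (simp add: UU_def matrix_matrix_mult_def)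

lemma deg_H: "deg w x * HH x $ e $ b = w x i * \<sigma> x i $ e $ b + (\<Sum>y\<in>UU. w x y * (\<Sum>c\<in>UNIV. \<sigma> x y $ e $ c * HH y $ c $ b))"
proof -
  have d: "deg w x > 0" by (rule deg_pos'[OF wg tw])
  have "deg w x * HH x $ e $ b = deg w x * tprob w x i * \<sigma> x i $ e $ b + (\<Sum>y\<in>UU. deg w x * tprob w x y * (\<Sum>c\<in>UNIV. \<sigma> x y $ e $ c * HH y $ c $ b))"
    by (subst Hentry[of x e b]) (simp add: distrib_left sum_distrib_left mult.assoc)
  then show ?thesis by (simp add: deg_tprob[OF wg d])
qed

definition gb :: "'d \<Rightarrow> 'n \<times> 'd \<Rightarrow> real" where "gb b q = HH (fst q) $ snd q $ b"

lemma Mg: "s \<in> UU \<Longrightarrow> (\<Sum>r\<in>TT. LL (s, e) r * gb b r) = - LL (s, e) (i, b)"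
proof -
  assume s: "s \<in> UU"
  then have si: "s \<noteq> i" by (simp add: UU_def)
  have "(\<Sum>r\<in>TT. LL (s, e) r * gb b r) = deg w s * HH s $ e $ b - (\<Sum>y\<in>UU. w s y * (\<Sum>c\<in>UNIV. \<sigma> s y $ e $ c * HH y $ c $ b))"
    unfolding Lsum using s by (simp add: gb_def)
  also have "\<dots> = w s i * \<sigma> s i $ e $ b" unfolding deg_H by simp
  finally show ?thesis using si by (simp add: L_eq)
qed

lemma Zcol: "r \<in> TT \<Longrightarrow> (\<Sum>s\<in>TT. N0 r s * LL s (i, b)) = - gb b r"
proof -
  assume r: "r \<in> TT"
  have "(\<Sum>s\<in>TT. N0 r s * LL s (i, b)) = (\<Sum>s\<in>TT. N0 r s * - (\<Sum>u\<in>TT. LL s u * gb b u))"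
  proof (rule sum.cong[OF refl])
    fix s assume "s \<in> TT"
    then obtain s1 e where "s = (s1, e)" "s1 \<in> UU" by (cases s) (auto simp: TT_eq)
    then show "N0 r s * LL s (i, b) = N0 r s * - (\<Sum>u\<in>TT. LL s u * gb b u)" using Mg by simp
  qed
  also have "\<dots> = - (\<Sum>s\<in>TT. \<Sum>u\<in>TT. N0 r s * LL s u * gb b u)"
    by (simp add: sum_negf sum_distrib_left mult.assoc)
  also have "\<dots> = - (\<Sum>u\<in>TT. \<Sum>s\<in>TT. N0 r s * LL s u * gb b u)"
    by (subst sum.swap) (rule refl)
  also have "\<dots> = - (\<Sum>u\<in>TT. mmul TT N0 LL r u * gb b u)"
    unfolding mmul_def by (simp add: sum_distrib_right)
  also have "\<dots> = - (\<Sum>u\<in>TT. if r = u then gb b u else 0)"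
    by (intro arg_cong[where f=uminus] sum.cong refl) (auto simp: N0L[OF r])
  also have "\<dots> = - gb b r" using r by simp
  finally show ?thesis .
qed

lemma C_col: "conductance w \<sigma> i j (x, a) (i, b) = LL (x, a) (i, b) + (\<Sum>r\<in>TT. LL (x, a) r * gb b r)"
proof -
  have "conductance w \<sigma> i j (x, a) (i, b) = LL (x, a) (i, b) - (\<Sum>r\<in>TT. \<Sum>s\<in>TT. LL (x, a) r * N0 r s * LL s (i, b))"
    unfolding conductance_def schur_def TT_def[symmetric] pinv_TT ..
  also have "(\<Sum>r\<in>TT. \<Sum>s\<in>TT. LL (x, a) r * N0 r s * LL s (i, b)) = (\<Sum>r\<in>TT. LL (x, a) r * (\<Sum>s\<in>TT. N0 r s * LL s (i, b)))"
    by (simp add: sum_distrib_left mult.assoc)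
  also have "\<dots> = (\<Sum>r\<in>TT. LL (x, a) r * - gb b r)"
    by (rule sum.cong[OF refl]) (simp add: Zcol)
  finally show ?thesis by (simp add: sum_negf)
qed

lemma C_ii: "blk (conductance w \<sigma> i j) i i = deg w i *\<^sub>R (mat 1 - HH i)"
proof -
  have iU: "i \<notin> UU" by (simp add: UU_def)
  have "conductance w \<sigma> i j (i, a) (i, b) = deg w i * ((if a = b then 1 else 0) - HH i $ a $ b)" for a b
  proof -
    have "conductance w \<sigma> i j (i, a) (i, b) = (if a = b then deg w i else 0)
       - (\<Sum>y\<in>UU. w i y * (\<Sum>c\<in>UNIV. \<sigma> i y $ a $ c * HH y $ c $ b))"
      unfolding C_col Lsum using iU by (simp add: L_eq w_diag[OF wg] gb_def)
    also have "(\<Sum>y\<in>UU. w i y * (\<Sum>c\<in>UNIV. \<sigma> i y $ a $ c * HH y $ c $ b)) = deg w i * HH i $ a $ b"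
      using deg_H[of i a b] by (simp add: w_diag[OF wg])
    finally show ?thesis by (simp add: right_diff_distrib)
  qed
  then show ?thesis by (simp add: blk_def vec_eq_iff mat_def)
qed

lemma C_ji: "blk (conductance w \<sigma> i j) j i = - deg w j *\<^sub>R HH j"
proof -
  have jU: "j \<notin> UU" by (simp add: UU_def)
  have "conductance w \<sigma> i j (j, a) (i, b) = - deg w j * HH j $ a $ b" for a b
  proof -
    have "conductance w \<sigma> i j (j, a) (i, b) = - w j i * \<sigma> j i $ a $ b
       - (\<Sum>y\<in>UU. w j y * (\<Sum>c\<in>UNIV. \<sigma> j y $ a $ c * HH y $ c $ b))"
      unfolding C_col Lsum using jU ij by (simp add: L_eq gb_def)
    also have "(\<Sum>y\<in>UU. w j y * (\<Sum>c\<in>UNIV. \<sigma> j y $ a $ c * HH y $ c $ b)) = deg w j * HH j $ a $ b - w j i * \<sigma> j i $ a $ b"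
      using deg_H[of j a b] by simp
    finally show ?thesis by simp
  qed
  then show ?thesis by (simp add: blk_def vec_eq_iff)
qed

end

theorem theorem5p9:
  fixes w :: "'n::finite \<Rightarrow> 'n \<Rightarrow> real"
    and \<sigma> :: "'n \<Rightarrow> 'n \<Rightarrow> real^'d::finite^'d"
    and i j :: 'n
  assumes "weighted_graph w" and "connection w \<sigma>" and "i \<noteq> j"
  defines "C \<equiv> conductance w \<sigma> i j"
    and "c \<equiv> eff_conductance w i j"
  shows "blk C i i = deg w i *\<^sub>R (mat 1 - (1 - hitprob w i j i) *\<^sub>R Omega1 w \<sigma> i i j)
    \<and> blk C j i = - (deg w j * hitprob w j i j) *\<^sub>R Omega1 w \<sigma> j i j
    \<and> c = deg w i * hitprob w i j i \<and> c = deg w j * hitprob w j i j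
    \<and> blk C i i = c *\<^sub>R mat 1 + (deg w i - c) *\<^sub>R (mat 1 - Omega1 w \<sigma> i i j)
    \<and> blk C i j = - c *\<^sub>R mat 1 + c *\<^sub>R (mat 1 - Omega1 w \<sigma> i j i)
    \<and> blk C j i = - c *\<^sub>R mat 1 + c *\<^sub>R (mat 1 - Omega1 w \<sigma> j i j)
    \<and> blk C j j = c *\<^sub>R mat 1 + (deg w j - c) *\<^sub>R (mat 1 - Omega1 w \<sigma> j j i)"
proof -
  note wg = assms(1) and cn = assms(2) and ij = assms(3)
  have ji: "j \<noteq> i" using ij by simp
  have tw: "\<exists>a b::'n. a \<noteq> b" using ij by blast
  have Csym: "conductance w \<sigma> j i = conductance w \<sigma> i j"
    unfolding conductance_def by (simp add: insert_commute)
  have Cii: "blk C i i = deg w i *\<^sub>R (mat 1 - hser w \<sigma> i i j)"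
    unfolding C_def by (rule C_ii[OF wg cn ij])
  have Cji: "blk C j i = - deg w j *\<^sub>R hser w \<sigma> j i j"
    unfolding C_def by (rule C_ji[OF wg cn ij])
  have Cjj: "blk C j j = deg w j *\<^sub>R (mat 1 - hser w \<sigma> j j i)"
    unfolding C_def Csym[symmetric] by (rule C_ii[OF wg cn ji])
  have Cij: "blk C i j = - deg w i *\<^sub>R hser w \<sigma> i j i"
    unfolding C_def Csym[symmetric] by (rule C_ji[OF wg cn ji])
  have ri: "hitprob w i i j = 1 - hitprob w i j i" using recurrence[OF wg ij, of i] by simp
  have rj: "hitprob w j j i = 1 - hitprob w j i j" using recurrence[OF wg ji, of j] by simp
  have ce: "c = deg w i * hitprob w i j i" unfolding c_def by (rule eff_cond[OF wg ij])
  have cs: "deg w i * hitprob w i j i = deg w j * hitprob w j i j" by (rule deg_hit_sym[OF wg ij])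
  have O: "hitprob w x b k *\<^sub>R Omega1 w \<sigma> x b k = hser w \<sigma> x b k" for x b k
    by (rule hitprob_Omega[OF wg tw cn])
  have O_ii: "hser w \<sigma> i i j = (1 - hitprob w i j i) *\<^sub>R Omega1 w \<sigma> i i j" using O[of i i j] ri by simp
  have O_jj: "hser w \<sigma> j j i = (1 - hitprob w j i j) *\<^sub>R Omega1 w \<sigma> j j i" using O[of j j i] rj by simp
  have O_ij: "hser w \<sigma> i j i = hitprob w i j i *\<^sub>R Omega1 w \<sigma> i j i" using O[of i j i] by simp
  have O_ji: "hser w \<sigma> j i j = hitprob w j i j *\<^sub>R Omega1 w \<sigma> j i j" using O[of j i j] by simp
  have g1: "blk C i i = deg w i *\<^sub>R (mat 1 - (1 - hitprob w i j i) *\<^sub>R Omega1 w \<sigma> i i j)"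
    using Cii O_ii by simp
  have g2: "blk C j i = - (deg w j * hitprob w j i j) *\<^sub>R Omega1 w \<sigma> j i j"
    using Cji O_ji by simp
  have g5: "blk C i i = c *\<^sub>R mat 1 + (deg w i - c) *\<^sub>R (mat 1 - Omega1 w \<sigma> i i j)"
    unfolding g1 ce by (simp add: algebra_simps)
  have g6: "blk C i j = - c *\<^sub>R mat 1 + c *\<^sub>R (mat 1 - Omega1 w \<sigma> i j i)"
    unfolding Cij O_ij ce by (simp add: algebra_simps)
  have g7: "blk C j i = - c *\<^sub>R mat 1 + c *\<^sub>R (mat 1 - Omega1 w \<sigma> j i j)"
    unfolding g2 ce cs by (simp add: algebra_simps)
  have g8: "blk C j j = c *\<^sub>R mat 1 + (deg w j - c) *\<^sub>R (mat 1 - Omega1 w \<sigma> j j i)"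
    unfolding Cjj O_jj ce cs by (simp add: algebra_simps)
  show ?thesis using g1 g2 ce cs g5 g6 g7 g8 by simp
qed

end
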